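(* Let $(P,\le,\mu,\gamma)$ be a preordered heap with target multiplication $\tau(a,b)=\gamma(\mu(\gamma a,\gamma b))$. If $e\in P$ is a left identity or a right identity for $\mu$ (i.e. $\mu(e,a)\simeq a$ for all $a\in P$, or $\mu(a,e)\simeq a$ for all $a\in P$), then $e$ is a double-sided identity for $\mu$ (i.e. $\mu(e,a)\simeq a\simeq\mu(a,e)$ for all $a$) and $\gamma e$ is a double-sided identity for $\tau$ (i.e. $\tau(\gamma e,a)\simeq a\simeq\tau(a,\gamma e)$ for all $a$). Analogously, if $e\in P$ is a left or right identity for $\tau$, then $e$ is a double-sided identity for $\tau$ and $\gamma e$ is a double-sided identity for $\mu$.
   Context: A preordered heap is a structure $(P,\le,\mu,\gamma)$ where $(P,\le)$ is a preorder (reflexive and transitive relation); $\mu\colon P\times P\to P$ (source multiplication) is monotonic in both arguments; $\gamma\colon P\to P$ (involution) is antitone ($a\le b\Rightarrow \gamma b\le\gamma a$); and the following axioms hold: (A1) $\gamma(\gamma(a))=a$ for all $a$; (A2a) $\mu(a,\gamma(\mu(\gamma b,a)))\le b$ for all $a,b\in P$; (A2b) $\mu(\gamma(\mu(a,\gamma b)),a)\le b$ for all $a,b\in P$. For $a,b\in P$, $a\simeq b$ means $a\le b$ and $b\le a$. *)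

theory Defs
  imports Main
begin

text \<open>A preordered heap on the carrier given by the whole type 'a:
  le is a preorder, mu (source multiplication) is monotone in both arguments,
  gamma (involution) is antitone, and axioms (A1), (A2a), (A2b) hold.\<close>

definition preordered_heap ::
  "('a \<Rightarrow> 'a \<Rightarrow> bool) \<Rightarrow> ('a \<Rightarrow> 'a \<Rightarrow> 'a) \<Rightarrow> ('a \<Rightarrow> 'a) \<Rightarrow> bool" where
  "preordered_heap le mu gamma \<longleftrightarrow>
     (\<forall>a. le a a) \<and>
     (\<forall>a b c. le a b \<longrightarrow> le b c \<longrightarrow> le a c) \<and>
     (\<forall>a a' b b'. le a a' \<longrightarrow> le b b' \<longrightarrow> le (mu a b) (mu a' b')) \<and>
     (\<forall>a b. le a b \<longrightarrow> le (gamma b) (gamma a)) \<and>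
     (\<forall>a. gamma (gamma a) = a) \<and>
     (\<forall>a b. le (mu a (gamma (mu (gamma b) a))) b) \<and>
     (\<forall>a b. le (mu (gamma (mu a (gamma b))) a) b)"

definition peq :: "('a \<Rightarrow> 'a \<Rightarrow> bool) \<Rightarrow> 'a \<Rightarrow> 'a \<Rightarrow> bool" where
  "peq le a b \<longleftrightarrow> le a b \<and> le b a"

definition target_mult :: "('a \<Rightarrow> 'a \<Rightarrow> 'a) \<Rightarrow> ('a \<Rightarrow> 'a) \<Rightarrow> 'a \<Rightarrow> 'a \<Rightarrow> 'a" where
  "target_mult mu gamma a b = gamma (mu (gamma a) (gamma b))"

definition left_identity :: "('a \<Rightarrow> 'a \<Rightarrow> bool) \<Rightarrow> ('a \<Rightarrow> 'a \<Rightarrow> 'a) \<Rightarrow> 'a \<Rightarrow> bool" where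
  "left_identity le m e \<longleftrightarrow> (\<forall>a. peq le (m e a) a)"

definition right_identity :: "('a \<Rightarrow> 'a \<Rightarrow> bool) \<Rightarrow> ('a \<Rightarrow> 'a \<Rightarrow> 'a) \<Rightarrow> 'a \<Rightarrow> bool" where
  "right_identity le m e \<longleftrightarrow> (\<forall>a. peq le (m a e) a)"

definition two_sided_identity :: "('a \<Rightarrow> 'a \<Rightarrow> bool) \<Rightarrow> ('a \<Rightarrow> 'a \<Rightarrow> 'a) \<Rightarrow> 'a \<Rightarrow> bool" where
  "two_sided_identity le m e \<longleftrightarrow> (\<forall>a. peq le (m e a) a \<and> peq le a (m a e))"

end

theory Submission
  imports Defs
begin

lemma ph_facts:
  assumes "preordered_heap le mu gamma"
  shows "\<And>a. le a a" "\<And>a b c. le a b \<Longrightarrow> le b c \<Longrightarrow> le a c"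
    "\<And>a a' b b'. le a a' \<Longrightarrow> le b b' \<Longrightarrow> le (mu a b) (mu a' b')"
    "\<And>a b. le a b \<Longrightarrow> le (gamma b) (gamma a)"
    "\<And>a. gamma (gamma a) = a"
    "\<And>a b. le (mu a (gamma (mu (gamma b) a))) b"
    "\<And>a b. le (mu (gamma (mu a (gamma b))) a) b"
  using assms unfolding preordered_heap_def by blast+

lemma gle:
  assumes "preordered_heap le mu gamma" "le (gamma x) (gamma y)"
  shows "le y x"
  using ph_facts(4,5)[OF assms(1)] assms(2) by metis

lemma left_two:
  assumes H: "preordered_heap le mu gamma" and L: "left_identity le mu e"
  shows "two_sided_identity le mu e"
proof -
  note F = ph_facts[OF H]
  have L': "le (mu e a) a" "le a (mu e a)" for a using L unfolding left_identity_def peq_def by auto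
  have 1: "le c (mu c e)" for c
  proof -
    have "le (gamma (mu (gamma (gamma c)) e)) (gamma c)"
      using F(2)[OF L'(2) F(6)[of e "gamma c"]] .
    then have "le (gamma (mu c e)) (gamma c)" using F(5) by simp
    then show ?thesis using gle[OF H] by blast
  qed
  have 2: "le (mu c e) c" for c
  proof -
    have "le (gamma (gamma c)) (gamma (mu e (gamma c)))" using F(4)[OF L'(1)] .
    then have "le c (gamma (mu e (gamma c)))" using F(5) by simp
    then have "le (mu c e) (mu (gamma (mu e (gamma c))) e)" using F(1,3) by blast
    then show ?thesis using F(2) F(7) by blast
  qed
  show ?thesis unfolding two_sided_identity_def peq_def using 1 2 L' by blast
qed

lemma right_two:
  assumes H: "preordered_heap le mu gamma" and L: "right_identity le mu e"
  shows "two_sided_identity le mu e"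
proof -
  note F = ph_facts[OF H]
  have L': "le (mu a e) a" "le a (mu a e)" for a using L unfolding right_identity_def peq_def by auto
  have 1: "le c (mu e c)" for c
  proof -
    have "le (gamma (mu e (gamma (gamma c)))) (gamma c)"
      using F(2)[OF L'(2) F(7)[of e "gamma c"]] .
    then have "le (gamma (mu e c)) (gamma c)" using F(5) by simp
    then show ?thesis using gle[OF H] by blast
  qed
  have 2: "le (mu e c) c" for c
  proof -
    have "le (gamma (gamma c)) (gamma (mu (gamma c) e))" using F(4)[OF L'(1)] .
    then have "le c (gamma (mu (gamma c) e))" using F(5) by simp
    then have "le (mu e c) (mu e (gamma (mu (gamma c) e)))" using F(1,3) by blast
    then show ?thesis using F(2) F(6) by blast
  qed
  show ?thesis unfolding two_sided_identity_def peq_def using 1 2 L' by blast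
qed

lemma two_target:
  assumes H: "preordered_heap le mu gamma" and T: "two_sided_identity le mu e"
  shows "two_sided_identity le (target_mult mu gamma) (gamma e)"
proof -
  note F = ph_facts[OF H]
  have T': "le (mu e a) a" "le a (mu e a)" "le (mu a e) a" "le a (mu a e)" for a
    using T unfolding two_sided_identity_def peq_def by auto
  show ?thesis unfolding two_sided_identity_def peq_def target_mult_def
    using F(4)[OF T'(1)] F(4)[OF T'(2)] F(4)[OF T'(3)] F(4)[OF T'(4)] F(5) by metis
qed

lemma tleft:
  assumes H: "preordered_heap le mu gamma" and L: "left_identity le (target_mult mu gamma) e"
  shows "left_identity le mu (gamma e)"
proof -
  note F = ph_facts[OF H]
  have G: "le (gamma (mu (gamma e) (gamma a))) a" "le a (gamma (mu (gamma e) (gamma a)))" for a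
    using L unfolding left_identity_def peq_def target_mult_def by auto
  have "le (gamma (mu (gamma e) x)) (gamma x)" "le (gamma x) (gamma (mu (gamma e) x))" for x
    using G[of "gamma x"] F(5) by auto
  then show ?thesis unfolding left_identity_def peq_def using gle[OF H] by blast
qed

lemma tright:
  assumes H: "preordered_heap le mu gamma" and L: "right_identity le (target_mult mu gamma) e"
  shows "right_identity le mu (gamma e)"
proof -
  note F = ph_facts[OF H]
  have G: "le (gamma (mu (gamma a) (gamma e))) a" "le a (gamma (mu (gamma a) (gamma e)))" for a
    using L unfolding right_identity_def peq_def target_mult_def by auto
  have "le (gamma (mu x (gamma e))) (gamma x)" "le (gamma x) (gamma (mu x (gamma e)))" for x
    using G[of "gamma x"] F(5) by auto
  then show ?thesis unfolding right_identity_def peq_def using gle[OF H] by blast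
qed

theorem corollary2:
  fixes le :: "'a \<Rightarrow> 'a \<Rightarrow> bool" and mu :: "'a \<Rightarrow> 'a \<Rightarrow> 'a" and gamma :: "'a \<Rightarrow> 'a"
  assumes "preordered_heap le mu gamma"
  shows "(\<forall>e. (left_identity le mu e \<or> right_identity le mu e) \<longrightarrow>
            two_sided_identity le mu e \<and> two_sided_identity le (target_mult mu gamma) (gamma e)) \<and>
         (\<forall>e. (left_identity le (target_mult mu gamma) e \<or> right_identity le (target_mult mu gamma) e) \<longrightarrow>
            two_sided_identity le (target_mult mu gamma) e \<and> two_sided_identity le mu (gamma e))"
proof -
  have A: "two_sided_identity le mu e \<and> two_sided_identity le (target_mult mu gamma) (gamma e)"
    if "left_identity le mu e \<or> right_identity le mu e" for e
    using that left_two[OF assms] right_two[OF assms] two_target[OF assms] by blast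
  have B: "two_sided_identity le (target_mult mu gamma) e \<and> two_sided_identity le mu (gamma e)"
    if "left_identity le (target_mult mu gamma) e \<or> right_identity le (target_mult mu gamma) e" for e
  proof -
    have "left_identity le mu (gamma e) \<or> right_identity le mu (gamma e)"
      using that tleft[OF assms] tright[OF assms] by blast
    from A[OF this] show ?thesis using ph_facts(5)[OF assms] by simp
  qed
  show ?thesis using A B by blast
qed

end
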